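(* Let $s=(s_1,\dots,s_m)$ be a sequence of positive integers. Then the $s$-permutahedron (the Hasse diagram of the $s$-weak order on $s$-decreasing trees) has a Hamilton path, i.e., there is a listing of all $s$-decreasing trees, each exactly once, in which every two consecutive trees form a cover relation of the $s$-weak order.
   Context: Let $s=(s_1,\dots,s_m)$ be a sequence of positive integers. An $s$-decreasing tree is a rooted plane tree with $m$ internal nodes labelled $1,\dots,m$ (together with unlabelled leaves) such that the internal node labelled $i$ has exactly $s_i+1$ children, ordered from left to right and indexed $0,1,\dots,s_i$, and labels strictly decrease along every path from the root (so the root is labelled $m$). For an $s$-decreasing tree $T$ and labels $a<b$, the tree-inversion number $\#_T(b,a)$ is defined as: $0$ if $a$ lies to the left of $b$ or in the subtree of the child of $b$ with index $0$; $i$ if $a$ lies in the subtree of the child of $b$ with index $i$ ($0\le i\le s_b$); and $s_b$ if $a$ lies to the right of $b$. The $s$-weak order is the partial order on $s$-decreasing trees given by $T\le T'$ iff $\#_T(b,a)\le \#_{T'}(b,a)$ for all $1\le a<b\le m$. The $s$-permutahedron is the graph whose vertices are the $s$-decreasing trees and whose edges are the cover relations of the $s$-weak order. *)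

theory Defs
  imports Main
begin

text \<open>Rooted plane trees: unlabelled leaves and internal nodes carrying a label
  and an ordered list of children (child index = position in the list, starting at 0).\<close>
datatype ptree = Leaf | Node nat "ptree list"

text \<open>Internal nodes of a tree, each with its address: the list of child indices
  on the path from the root to the node.\<close>
fun nodes :: "ptree \<Rightarrow> (nat \<times> nat list) list"
  and nodesl :: "nat \<Rightarrow> ptree list \<Rightarrow> (nat \<times> nat list) list" where
  "nodes Leaf = []"
| "nodes (Node i ts) = (i, []) # nodesl 0 ts"
| "nodesl j [] = []"
| "nodesl j (t # ts) = map (\<lambda>(l, p). (l, j # p)) (nodes t) @ nodesl (Suc j) ts"

definition labels :: "ptree \<Rightarrow> nat list" where
  "labels T = map fst (nodes T)"

text \<open>The sequence s = (s_1,...,s_m) is a list; s_i = s ! (i - 1), m = length s.\<close>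
definition sval :: "nat list \<Rightarrow> nat \<Rightarrow> nat" where
  "sval s i = s ! (i - 1)"

fun sdec_shape :: "nat list \<Rightarrow> ptree \<Rightarrow> bool" where
  "sdec_shape s Leaf = True"
| "sdec_shape s (Node i ts) =
     (length ts = sval s i + 1 \<and>
      (\<forall>t \<in> set ts. sdec_shape s t \<and> (\<forall>l \<in> set (labels t). l < i)))"

definition s_decreasing_tree :: "nat list \<Rightarrow> ptree \<Rightarrow> bool" where
  "s_decreasing_tree s T \<longleftrightarrow>
     sdec_shape s T \<and> distinct (labels T) \<and> set (labels T) = {1..length s}"

definition pos :: "ptree \<Rightarrow> nat \<Rightarrow> nat list" where
  "pos T a = (THE p. (a, p) \<in> set (nodes T))"

definition left_of :: "nat list \<Rightarrow> nat list \<Rightarrow> bool" where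
  "left_of pa pb \<longleftrightarrow> (\<exists>q x y ra rb. pa = q @ x # ra \<and> pb = q @ y # rb \<and> x < y)"

definition tree_inv :: "nat list \<Rightarrow> ptree \<Rightarrow> nat \<Rightarrow> nat \<Rightarrow> nat" where
  "tree_inv s T b a =
     (let pa = pos T a; pb = pos T b in
      if \<exists>c r. pa = pb @ c # r then pa ! length pb
      else if left_of pa pb then 0
      else sval s b)"

definition s_weak_le :: "nat list \<Rightarrow> ptree \<Rightarrow> ptree \<Rightarrow> bool" where
  "s_weak_le s T T' \<longleftrightarrow>
     (\<forall>a b. 1 \<le> a \<and> a < b \<and> b \<le> length s \<longrightarrow> tree_inv s T b a \<le> tree_inv s T' b a)"

definition s_weak_cover :: "nat list \<Rightarrow> ptree \<Rightarrow> ptree \<Rightarrow> bool" where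
  "s_weak_cover s T T' \<longleftrightarrow>
     s_decreasing_tree s T \<and> s_decreasing_tree s T' \<and>
     s_weak_le s T T' \<and> T \<noteq> T' \<and>
     \<not> (\<exists>U. s_decreasing_tree s U \<and> s_weak_le s T U \<and> s_weak_le s U T' \<and> U \<noteq> T \<and> U \<noteq> T')"

definition s_perm_edge :: "nat list \<Rightarrow> ptree \<Rightarrow> ptree \<Rightarrow> bool" where
  "s_perm_edge s T T' \<longleftrightarrow> s_weak_cover s T T' \<or> s_weak_cover s T' T"

end

theory Submission
  imports Defs
begin


lemma left_of_Nil1[simp]: "\<not> left_of [] y" by (auto simp: left_of_def)
lemma left_of_Nil2[simp]: "\<not> left_of x []" by (auto simp: left_of_def)
lemma left_of_Cons[simp]: "left_of (a#x) (b#y) \<longleftrightarrow> a < b \<or> (a = b \<and> left_of x y)"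
proof
  assume "left_of (a#x) (b#y)"
  then obtain q u v ra rb where h: "a#x = q @ u # ra" "b#y = q @ v # rb" "u < v"
    by (auto simp: left_of_def)
  show "a < b \<or> (a = b \<and> left_of x y)"
  proof (cases q)
    case Nil then show ?thesis using h by auto
  next
    case (Cons z q') then show ?thesis using h by (auto simp: left_of_def)
  qed
next
  assume "a < b \<or> (a = b \<and> left_of x y)"
  then show "left_of (a#x) (b#y)"
  proof
    assume "a < b" then show ?thesis unfolding left_of_def by (rule_tac x="[]" in exI) auto
  next
    assume "a = b \<and> left_of x y"
    then obtain q u v ra rb where "x = q @ u # ra" "y = q @ v # rb" "u < v" "a = b"
      by (auto simp: left_of_def)
    then show ?thesis unfolding left_of_def by (rule_tac x="a#q" in exI) auto
  qed
qed

definition G :: "(nat \<Rightarrow> nat) \<Rightarrow> nat \<Rightarrow> nat list \<Rightarrow> nat list \<Rightarrow> nat" where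
  "G f l q p = (if \<exists>c r. p = q @ c # r then p ! length q else if left_of p q then 0 else f l)"

lemma ext_Cons: "(\<exists>c r. d # p = (a # q) @ c # r) \<longleftrightarrow> d = a \<and> (\<exists>c r. p = q @ c # r)"
  by auto

lemma G_same[simp]: "G f l (c#q) (c#r) = G f l q r"
  unfolding G_def by (simp only: ext_Cons left_of_Cons) auto

lemma G_lt: "d < c \<Longrightarrow> G f l (c#q) (d#r) = 0"
  unfolding G_def by (simp only: ext_Cons left_of_Cons) auto

lemma G_gt: "c < d \<Longrightarrow> G f l (c#q) (d#r) = f l"
  unfolding G_def by (simp only: ext_Cons left_of_Cons) auto

lemma G_root[simp]: "G f l [] (c#r) = c"
  unfolding G_def by auto

fun leaves :: "ptree \<Rightarrow> nat list list"
  and leavesl :: "nat \<Rightarrow> ptree list \<Rightarrow> nat list list" where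
  "leaves Leaf = [[]]"
| "leaves (Node i ts) = leavesl 0 ts"
| "leavesl j [] = []"
| "leavesl j (t # ts) = map (Cons j) (leaves t) @ leavesl (Suc j) ts"

fun wfa :: "(nat \<Rightarrow> nat) \<Rightarrow> ptree \<Rightarrow> bool" where
  "wfa f Leaf = True"
| "wfa f (Node i ts) = (length ts = f i + 1 \<and> (\<forall>t\<in>set ts. wfa f t))"

lemma shape_wfa: "sdec_shape s T \<Longrightarrow> wfa (sval s) T"
  by (induction T) auto

lemma nodesl_set: "set (nodesl j ts) = {(l, c#q) | l c q. j \<le> c \<and> c < j + length ts \<and> (l,q) \<in> set (nodes (ts ! (c - j)))}"
proof (induction ts arbitrary: j)
  case Nil then show ?case by auto
next
  case (Cons t ts)
  show ?case
  proof (rule set_eqI, rule iffI)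
    fix x assume "x \<in> set (nodesl j (t # ts))"
    then show "x \<in> {(l, c#q) | l c q. j \<le> c \<and> c < j + length (t#ts) \<and> (l,q) \<in> set (nodes ((t#ts) ! (c - j)))}"
      using Cons by (auto simp: Suc_diff_le)
  next
    fix x assume "x \<in> {(l, c#q) | l c q. j \<le> c \<and> c < j + length (t#ts) \<and> (l,q) \<in> set (nodes ((t#ts) ! (c - j)))}"
    then obtain l c q where x: "x = (l, c#q)" "j \<le> c" "c < j + length (t#ts)" "(l,q) \<in> set (nodes ((t#ts) ! (c - j)))" by blast
    show "x \<in> set (nodesl j (t # ts))"
    proof (cases "c = j")
      case True then show ?thesis using x by force
    next
      case False
      then have "c - j = Suc (c - Suc j)" using x by auto
      then show ?thesis using x False Cons by auto
    qed
  qed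
qed

lemma leavesl_set: "set (leavesl j ts) = {c#q | c q. j \<le> c \<and> c < j + length ts \<and> q \<in> set (leaves (ts ! (c - j)))}"
proof (induction ts arbitrary: j)
  case Nil then show ?case by auto
next
  case (Cons t ts)
  show ?case
  proof (rule set_eqI, rule iffI)
    fix x assume "x \<in> set (leavesl j (t # ts))"
    then show "x \<in> {c#q | c q. j \<le> c \<and> c < j + length (t#ts) \<and> q \<in> set (leaves ((t#ts) ! (c - j)))}"
      using Cons by (auto simp: Suc_diff_le)
  next
    fix x assume "x \<in> {c#q | c q. j \<le> c \<and> c < j + length (t#ts) \<and> q \<in> set (leaves ((t#ts) ! (c - j)))}"
    then obtain c q where x: "x = c#q" "j \<le> c" "c < j + length (t#ts)" "q \<in> set (leaves ((t#ts) ! (c - j)))" by blast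
    show "x \<in> set (leavesl j (t # ts))"
    proof (cases "c = j")
      case True then show ?thesis using x by force
    next
      case False
      then have "c - j = Suc (c - Suc j)" using x by auto
      then show ?thesis using x False Cons by auto
    qed
  qed
qed

lemma nodes_Node_set: "set (nodes (Node i ts)) = insert (i, []) {(l, c#q) | l c q. c < length ts \<and> (l,q) \<in> set (nodes (ts ! c))}"
  by (simp add: nodesl_set)

lemma leaves_Node_set: "set (leaves (Node i ts)) = {c#q | c q. c < length ts \<and> q \<in> set (leaves (ts ! c))}"
  by (simp add: leavesl_set)



lemma nodesl_addr: "(l,a) \<in> set (nodesl j ts) \<Longrightarrow> \<exists>c q. a = c#q \<and> j \<le> c \<and> c < j + length ts"
  by (auto simp: nodesl_set)
lemma leavesl_addr: "a \<in> set (leavesl j ts) \<Longrightarrow> \<exists>c q. a = c#q \<and> j \<le> c \<and> c < j + length ts"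
  by (auto simp: leavesl_set)

lemma first_last:
  shows "(wfa f T \<longrightarrow> leaves T \<noteq> [] \<and> (\<forall>(l,q)\<in>set(nodes T). G f l q (hd (leaves T)) = 0 \<and> G f l q (last (leaves T)) = f l))"
 and "((\<forall>t\<in>set ts. wfa f t) \<longrightarrow> ts \<noteq> [] \<longrightarrow> leavesl j ts \<noteq> [] \<and> (\<exists>r. hd (leavesl j ts) = j # r)
     \<and> (\<exists>r. last (leavesl j ts) = (j + length ts - 1) # r)
     \<and> (\<forall>(l,q)\<in>set(nodesl j ts). G f l q (hd (leavesl j ts)) = 0 \<and> G f l q (last (leavesl j ts)) = f l))"
proof (induction T and j ts rule: nodes_nodesl.induct)
  case 1
  then show ?case by auto
next
  case (2 i ts)
  show ?case
  proof
    assume w: "wfa f (Node i ts)"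
    then have ne: "ts \<noteq> []" and ws: "\<forall>t\<in>set ts. wfa f t" by auto
    from 2 ws ne obtain r1 r2 where
      h: "leavesl 0 ts \<noteq> []" "hd (leavesl 0 ts) = 0 # r1" "last (leavesl 0 ts) = (length ts - 1) # r2"
         "\<forall>(l,q)\<in>set(nodesl 0 ts). G f l q (hd (leavesl 0 ts)) = 0 \<and> G f l q (last (leavesl 0 ts)) = f l"
      by auto
    have "length ts - 1 = f i" using w by simp
    then show "leaves (Node i ts) \<noteq> [] \<and> (\<forall>(l,q)\<in>set(nodes (Node i ts)). G f l q (hd (leaves (Node i ts))) = 0 \<and> G f l q (last (leaves (Node i ts))) = f l)"
      using h by auto
  qed
next
  case (3 j)
  then show ?case by simp
next
  case (4 j t ts)
  show ?case
  proof (intro impI)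
    assume ws: "\<forall>t\<in>set (t # ts). wfa f t"
    then have wt: "wfa f t" and wts: "\<forall>t\<in>set ts. wfa f t" by auto
    from 4(1) wt have lt: "leaves t \<noteq> []"
      and gt: "\<forall>(l,q)\<in>set(nodes t). G f l q (hd (leaves t)) = 0 \<and> G f l q (last (leaves t)) = f l" by auto
    have hd1: "hd (leavesl j (t#ts)) = j # hd (leaves t)" using lt by (simp add: hd_map)
    show "leavesl j (t # ts) \<noteq> [] \<and> (\<exists>r. hd (leavesl j (t # ts)) = j # r) \<and>
      (\<exists>r. last (leavesl j (t # ts)) = (j + length (t # ts) - 1) # r) \<and>
      (\<forall>(l, q)\<in>set (nodesl j (t # ts)). G f l q (hd (leavesl j (t # ts))) = 0 \<and> G f l q (last (leavesl j (t # ts))) = f l)"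
    proof (cases "ts = []")
      case True
      then show ?thesis using lt gt by (auto simp: last_map hd_map)
    next
      case False
      from 4(2) wts False obtain r1 r2 where
        h: "leavesl (Suc j) ts \<noteq> []" "hd (leavesl (Suc j) ts) = Suc j # r1" "last (leavesl (Suc j) ts) = (Suc j + length ts - 1) # r2"
         "\<forall>(l,q)\<in>set(nodesl (Suc j) ts). G f l q (hd (leavesl (Suc j) ts)) = 0 \<and> G f l q (last (leavesl (Suc j) ts)) = f l"
        by auto
      have la: "last (leavesl j (t#ts)) = last (leavesl (Suc j) ts)" using h(1) by simp
      have A: "\<forall>(l,q)\<in>set(nodes t). G f l (j#q) (hd (leavesl j (t # ts))) = 0 \<and> G f l (j#q) (last (leavesl j (t # ts))) = f l"
        using gt hd1 la h(3) False by (auto simp: G_gt)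
      have B: "\<forall>(l,q)\<in>set(nodesl (Suc j) ts). G f l q (hd (leavesl j (t # ts))) = 0 \<and> G f l q (last (leavesl j (t # ts))) = f l"
      proof (intro ballI, clarify)
        fix l q assume lq: "(l,q) \<in> set (nodesl (Suc j) ts)"
        then obtain c q' where "q = c # q'" "Suc j \<le> c" using nodesl_addr by blast
        then show "G f l q (hd (leavesl j (t # ts))) = 0 \<and> G f l q (last (leavesl j (t # ts))) = f l"
          using hd1 la h(4) lq by (auto simp: G_lt)
      qed
      show ?thesis using A B hd1 la h False by auto
    qed
  qed
qed



definition inc :: "(nat \<Rightarrow> nat) \<Rightarrow> (nat \<times> nat list) set \<Rightarrow> nat list \<Rightarrow> nat list \<Rightarrow> nat \<times> nat list \<Rightarrow> bool" where
  "inc f N p p' e = (\<forall>e'\<in>N. G f (fst e') (snd e') p' = G f (fst e') (snd e') p + (if e' = e then 1 else 0))"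

definition same :: "(nat \<Rightarrow> nat) \<Rightarrow> (nat \<times> nat list) set \<Rightarrow> nat list \<Rightarrow> nat list \<Rightarrow> bool" where
  "same f N p p' = (\<forall>e'\<in>N. G f (fst e') (snd e') p' = G f (fst e') (snd e') p)"

definition RF :: "(nat \<Rightarrow> nat) \<Rightarrow> nat \<Rightarrow> ptree list \<Rightarrow> nat list \<Rightarrow> nat list \<Rightarrow> bool" where
  "RF f j ts p p' = (p \<noteq> [] \<and> p' \<noteq> [] \<and> j \<le> hd p \<and> j \<le> hd p' \<and>
     ((hd p = hd p' \<and> (\<exists>e\<in>set (nodesl j ts). inc f (set (nodesl j ts)) p p' e))
      \<or> (Suc (hd p) = hd p' \<and> same f (set (nodesl j ts)) p p')))"

lemma nodesl_Cons_set: "set (nodesl j (t#ts)) = (\<lambda>(l,p). (l, j#p)) ` set (nodes t) \<union> set (nodesl (Suc j) ts)"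
  by auto

lemma step_lemma:
  shows "wfa f T \<longrightarrow> successively (\<lambda>p p'. \<exists>e\<in>set (nodes T). inc f (set (nodes T)) p p' e) (leaves T)"
  and "(\<forall>t\<in>set ts. wfa f t) \<longrightarrow> successively (RF f j ts) (leavesl j ts)"
proof (induction T and j ts rule: nodes_nodesl.induct)
  case 1
  then show ?case by simp
next
  case (2 i ts)
  show ?case
  proof
    assume w: "wfa f (Node i ts)"
    then have ws: "\<forall>t\<in>set ts. wfa f t" by auto
    with 2 have S: "successively (RF f 0 ts) (leavesl 0 ts)" by auto
    have rnot: "(i, []) \<notin> set (nodesl 0 ts)" using nodesl_addr by blast
    show "successively (\<lambda>p p'. \<exists>e\<in>set (nodes (Node i ts)). inc f (set (nodes (Node i ts))) p p' e) (leaves (Node i ts))"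
      unfolding leaves.simps
    proof (rule successively_mono[OF S])
      fix p p' assume R: "RF f 0 ts p p'"
      then obtain c r c' r' where pc: "p = c # r" "p' = c' # r'"
        unfolding RF_def by (cases p; cases p'; auto)
      have ns: "set (nodes (Node i ts)) = insert (i, []) (set (nodesl 0 ts))" by simp
      from R show "\<exists>e\<in>set (nodes (Node i ts)). inc f (set (nodes (Node i ts))) p p' e"
        unfolding RF_def
      proof (elim conjE disjE)
        assume "hd p = hd p'" "\<exists>e\<in>set (nodesl 0 ts). inc f (set (nodesl 0 ts)) p p' e"
        then obtain e where e: "e \<in> set (nodesl 0 ts)" "inc f (set (nodesl 0 ts)) p p' e" "c = c'"
          using pc by auto
        have "e \<noteq> (i,[])" using e rnot by auto
        then have "inc f (set (nodes (Node i ts))) p p' e"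
          using e pc unfolding ns inc_def by auto
        then show ?thesis using e ns by blast
      next
        assume "Suc (hd p) = hd p'" "same f (set (nodesl 0 ts)) p p'"
        then have "inc f (set (nodes (Node i ts))) p p' (i,[])"
          using pc rnot unfolding ns inc_def same_def by auto
        then show ?thesis using ns by blast
      qed
    qed
  qed
next
  case (3 j)
  then show ?case by simp
next
  case (4 j t ts)
  show ?case
  proof
    assume ws: "\<forall>t\<in>set (t # ts). wfa f t"
    then have wt: "wfa f t" and wts: "\<forall>t\<in>set ts. wfa f t" by auto
    have St: "successively (\<lambda>p p'. \<exists>e\<in>set (nodes t). inc f (set (nodes t)) p p' e) (leaves t)"
      using 4(1) wt by auto
    have Sts: "successively (RF f (Suc j) ts) (leavesl (Suc j) ts)" using 4(2) wts by auto
    let ?N = "set (nodesl j (t#ts))"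
    have A: "successively (RF f j (t#ts)) (map (Cons j) (leaves t))"
      unfolding successively_map
    proof (rule successively_mono[OF St])
      fix r r' assume "\<exists>e\<in>set (nodes t). inc f (set (nodes t)) r r' e"
      then obtain l0 q0 where e0: "(l0,q0) \<in> set (nodes t)" "inc f (set (nodes t)) r r' (l0,q0)" by auto
      have "inc f ?N (j#r) (j#r') (l0, j#q0)"
        unfolding inc_def
      proof
        fix e' assume "e' \<in> ?N"
        then consider (a) l' q' where "e' = (l', j#q')" "(l',q') \<in> set (nodes t)"
          | (b) "e' \<in> set (nodesl (Suc j) ts)" by auto
        then show "G f (fst e') (snd e') (j # r') = G f (fst e') (snd e') (j # r) + (if e' = (l0, j # q0) then 1 else 0)"
        proof cases
          case a then show ?thesis using e0(2) unfolding inc_def by auto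
        next
          case b
          then obtain c q where "snd e' = c # q" "Suc j \<le> c" using nodesl_addr
            by (metis prod.collapse)
          then show ?thesis by (auto simp: G_lt)
        qed
      qed
      moreover have "(l0, j#q0) \<in> ?N" using e0 by auto
      ultimately show "RF f j (t # ts) (j # r) (j # r')" unfolding RF_def by auto
    qed
    have B: "successively (RF f j (t#ts)) (leavesl (Suc j) ts)"
    proof (rule successively_mono[OF Sts])
      fix p p' assume R: "RF f (Suc j) ts p p'"
      then obtain c r c' r' where pc: "p = c # r" "p' = c' # r'" "Suc j \<le> c" "Suc j \<le> c'"
        unfolding RF_def by (cases p; cases p'; auto)
      have other: "G f (fst e') (snd e') p = f (fst e')" "G f (fst e') (snd e') p' = f (fst e')"
        if "e' \<in> (\<lambda>(l,p). (l, j#p)) ` set (nodes t)" for e'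
        using that pc by (auto simp: G_gt)
      have notin: "e \<notin> (\<lambda>(l,p). (l, j#p)) ` set (nodes t)" if "e \<in> set (nodesl (Suc j) ts)" for e
        using that nodesl_addr by fastforce
      from R show "RF f j (t # ts) p p'"
        unfolding RF_def
      proof (elim conjE disjE)
        assume h: "hd p = hd p'" "\<exists>e\<in>set (nodesl (Suc j) ts). inc f (set (nodesl (Suc j) ts)) p p' e"
        then obtain e where e: "e \<in> set (nodesl (Suc j) ts)" "inc f (set (nodesl (Suc j) ts)) p p' e" by auto
        have "inc f ?N p p' e" unfolding inc_def
        proof
          fix e' assume "e' \<in> ?N"
          then consider (a) "e' \<in> (\<lambda>(l,p). (l, j#p)) ` set (nodes t)" | (b) "e' \<in> set (nodesl (Suc j) ts)"
            unfolding nodesl_Cons_set by blast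
          then show "G f (fst e') (snd e') p' = G f (fst e') (snd e') p + (if e' = e then 1 else 0)"
          proof cases
            case a
            have "e' \<noteq> e" using notin e(1) a by blast
            then show ?thesis using other[OF a] by simp
          next
            case b then show ?thesis using e(2) unfolding inc_def by auto
          qed
        qed
        then show "p \<noteq> [] \<and> p' \<noteq> [] \<and> j \<le> hd p \<and> j \<le> hd p' \<and>
          (hd p = hd p' \<and> (\<exists>e\<in>?N. inc f ?N p p' e) \<or> Suc (hd p) = hd p' \<and> same f ?N p p')"
          using pc h e by auto
      next
        assume h: "Suc (hd p) = hd p'" "same f (set (nodesl (Suc j) ts)) p p'"
        have "same f ?N p p'" unfolding same_def
        proof
          fix e' assume "e' \<in> ?N"
          then consider (a) "e' \<in> (\<lambda>(l,p). (l, j#p)) ` set (nodes t)" | (b) "e' \<in> set (nodesl (Suc j) ts)"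
            unfolding nodesl_Cons_set by blast
          then show "G f (fst e') (snd e') p' = G f (fst e') (snd e') p"
          proof cases
            case a then show ?thesis using other[OF a] by simp
          next
            case b then show ?thesis using h(2) unfolding same_def by auto
          qed
        qed
        then show "p \<noteq> [] \<and> p' \<noteq> [] \<and> j \<le> hd p \<and> j \<le> hd p' \<and>
          (hd p = hd p' \<and> (\<exists>e\<in>?N. inc f ?N p p' e) \<or> Suc (hd p) = hd p' \<and> same f ?N p p')"
          using pc h by auto
      qed
    qed
    have C: "RF f j (t#ts) (last (map (Cons j) (leaves t))) (hd (leavesl (Suc j) ts))"
      if ne: "leavesl (Suc j) ts \<noteq> []"
    proof -
      obtain t1 ts' where tts: "ts = t1 # ts'" using ne by (cases ts) auto
      have lt: "leaves t \<noteq> []" and gt: "\<forall>(l,q)\<in>set(nodes t). G f l q (last (leaves t)) = f l"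
        using first_last(1)[of f t] wt by auto
      have wt1: "wfa f t1" using wts tts by auto
      have lt1: "leaves t1 \<noteq> []" and gt1: "\<forall>(l,q)\<in>set(nodes t1). G f l q (hd (leaves t1)) = 0"
        using first_last(1)[of f t1] wt1 by auto
      have lp: "last (map (Cons j) (leaves t)) = j # last (leaves t)" using lt by (simp add: last_map)
      have hp: "hd (leavesl (Suc j) ts) = Suc j # hd (leaves t1)" using lt1 tts by (simp add: hd_map)
      have "same f ?N (j # last (leaves t)) (Suc j # hd (leaves t1))"
        unfolding same_def
      proof
        fix e' assume "e' \<in> ?N"
        then consider (a) l' q' where "e' = (l', j#q')" "(l',q') \<in> set (nodes t)"
          | (b) l' q' where "e' = (l', Suc j#q')" "(l',q') \<in> set (nodes t1)"
          | (c) "e' \<in> set (nodesl (Suc (Suc j)) ts')"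
          using tts by auto
        then show "G f (fst e') (snd e') (Suc j # hd (leaves t1)) = G f (fst e') (snd e') (j # last (leaves t))"
        proof cases
          case a then show ?thesis using gt by (auto simp: G_gt)
        next
          case b then show ?thesis using gt1 by (auto simp: G_lt)
        next
          case c
          then obtain c q where "snd e' = c # q" "Suc (Suc j) \<le> c" using nodesl_addr
            by (metis prod.collapse)
          then show ?thesis by (auto simp: G_lt)
        qed
      qed
      then show ?thesis unfolding RF_def lp hp by auto
    qed
    show "successively (RF f j (t # ts)) (leavesl j (t # ts))"
      unfolding leavesl.simps successively_append_iff using A B C by auto
  qed
qed



lemma successively_nth: "successively P xs \<Longrightarrow> Suc j < length xs \<Longrightarrow> P (xs ! j) (xs ! Suc j)"
proof (induction P xs arbitrary: j rule: successively.induct)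
  case (3 P x y xs)
  then show ?case by (cases j) auto
qed auto

lemma labels_Node: "set (labels (Node i ts)) = insert i (\<Union>t\<in>set ts. set (labels t))"
proof -
  have "set (labels (Node i ts)) = fst ` set (nodes (Node i ts))" by (simp add: labels_def)
  also have "\<dots> = insert i (\<Union>c\<in>{..<length ts}. fst ` set (nodes (ts ! c)))"
    unfolding nodes_Node_set by force
  also have "(\<Union>c\<in>{..<length ts}. fst ` set (nodes (ts ! c))) = (\<Union>t\<in>set ts. set (labels t))"
  proof -
    have e: "set ts = (\<lambda>c. ts ! c) ` {..<length ts}" by (auto simp: in_set_conv_nth image_def)
    show ?thesis unfolding e by (simp add: labels_def)
  qed
  finally show ?thesis .
qed

lemma labels_Leaf[simp]: "labels Leaf = []" by (simp add: labels_def)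

fun relab :: "(nat \<Rightarrow> nat) \<Rightarrow> ptree \<Rightarrow> ptree" where
  "relab g Leaf = Leaf"
| "relab g (Node i ts) = Node (g i) (map (relab g) ts)"

lemma relab_nodes:
  shows "nodes (relab g T) = map (\<lambda>(l,q). (g l, q)) (nodes T)"
  and "nodesl j (map (relab g) ts) = map (\<lambda>(l,q). (g l, q)) (nodesl j ts)"
  by (induction T and j ts rule: nodes_nodesl.induct) (auto simp: case_prod_beta)

lemma relab_leaves:
  shows "leaves (relab g T) = leaves T"
  and "leavesl j (map (relab g) ts) = leavesl j ts"
  by (induction T and j ts rule: nodes_nodesl.induct) auto

lemma relab_labels: "labels (relab g T) = map g (labels T)"
  by (simp add: labels_def relab_nodes case_prod_beta)

lemma relab_relab: "relab g (relab h T) = relab (g \<circ> h) T"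
  by (induction T) auto

lemma relab_id: "(\<forall>l\<in>set (labels T). g l = l) \<Longrightarrow> relab g T = T"
proof (induction T)
  case Leaf then show ?case by simp
next
  case (Node i ts)
  then have "map (relab g) ts = ts" by (auto simp: labels_Node intro: map_idI)
  then show ?case using Node by (simp add: labels_Node)
qed

lemma relab_shape: "(\<forall>l\<in>set (labels t). 1 \<le> l) \<Longrightarrow> sdec_shape (x#s') (relab Suc t) = sdec_shape s' t"
proof (induction t)
  case Leaf then show ?case by simp
next
  case (Node i ts)
  have i: "1 \<le> i" using Node.prems by (simp add: labels_Node)
  have sv: "sval (x#s') (Suc i) = sval s' i" using i by (simp add: sval_def nth_Cons')
  have IH: "\<forall>t\<in>set ts. sdec_shape (x#s') (relab Suc t) = sdec_shape s' t"
    using Node by (auto simp: labels_Node)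
  show ?case using sv IH by (auto simp: relab_labels)
qed

fun ins :: "nat list \<Rightarrow> ptree \<Rightarrow> ptree \<Rightarrow> ptree" where
  "ins [] X T = X"
| "ins (c#p) X Leaf = Leaf"
| "ins (c#p) X (Node i ts) = Node i (ts[c := ins p X (ts ! c)])"

lemma ins_labels: "set (labels (ins p X T)) \<subseteq> set (labels T) \<union> set (labels X)"
proof (induction p arbitrary: T)
  case Nil then show ?case by simp
next
  case (Cons c p)
  show ?case
  proof (cases T)
    case Leaf then show ?thesis by simp
  next
    case (Node i ts)
    show ?thesis
    proof (cases "c < length ts")
      case True
      have "set (ts[c := ins p X (ts ! c)]) \<subseteq> insert (ins p X (ts ! c)) (set ts)"
        by (rule set_update_subset_insert)
      then show ?thesis using Node True Cons[of "ts ! c"] by (fastforce simp: labels_Node)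
    next
      case False then show ?thesis using Node by (auto simp: labels_Node list_update_beyond)
    qed
  qed
qed

lemma ins_shape: "sdec_shape s T \<Longrightarrow> sdec_shape s X \<Longrightarrow> (\<forall>l\<in>set (labels X). \<forall>l'\<in>set (labels T). l < l')
  \<Longrightarrow> sdec_shape s (ins p X T)"
proof (induction p arbitrary: T)
  case Nil then show ?case by simp
next
  case (Cons c p)
  show ?case
  proof (cases T)
    case Leaf then show ?thesis by simp
  next
    case (Node i ts)
    show ?thesis
    proof (cases "c < length ts")
      case True
      let ?u = "ins p X (ts ! c)"
      have tc: "ts ! c \<in> set ts" using True by simp
      have sh: "sdec_shape s (ts ! c)" using Cons.prems Node tc by auto
      have lt: "\<forall>l\<in>set (labels (ts ! c)). l < i" using Cons.prems Node tc by auto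
      have lX: "\<forall>l\<in>set (labels X). l < i" using Cons.prems(3) Node by (auto simp: labels_Node)
      have lX2: "\<forall>l\<in>set (labels X). \<forall>l'\<in>set (labels (ts ! c)). l < l'"
        using Cons.prems(3) Node tc by (auto simp: labels_Node)
      have su: "sdec_shape s ?u" using Cons.IH[OF sh Cons.prems(2) lX2] .
      have lu: "\<forall>l\<in>set (labels ?u). l < i" using ins_labels[of p X "ts ! c"] lt lX by blast
      have "set (ts[c := ?u]) \<subseteq> insert ?u (set ts)"
        by (rule set_update_subset_insert)
      then show ?thesis using Node True su lu Cons.prems(1) by auto
    next
      case False then show ?thesis using Node Cons.prems by (simp add: list_update_beyond)
    qed
  qed
qed

lemma leaves_Leaf_only: "[] \<in> set (leaves T) \<Longrightarrow> T = Leaf"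
  by (cases T) (auto simp: leavesl_set)

lemma nodesl_length: "length (nodesl j ts) = sum_list (map (\<lambda>t. length (nodes t)) ts)"
  by (induction ts arbitrary: j) auto

lemma ins_nodes:
  "p \<in> set (leaves T) \<Longrightarrow>
   set (nodes (ins p X T)) = set (nodes T) \<union> (\<lambda>(l,q). (l, p@q)) ` set (nodes X) \<and>
   length (nodes (ins p X T)) = length (nodes T) + length (nodes X)"
proof (induction p arbitrary: T)
  case Nil
  then have "T = Leaf" using leaves_Leaf_only by blast
  then show ?case by (simp add: image_def)
next
  case (Cons c p)
  then obtain i ts where T: "T = Node i ts" by (cases T) auto
  have c: "c < length ts" and pin: "p \<in> set (leaves (ts ! c))" using Cons.prems T by (auto simp: leavesl_set)
  note IH = Cons.IH[OF pin]
  let ?u = "ins p X (ts ! c)"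
  have set1: "set (nodes (ins (c#p) X T)) = set (nodes T) \<union> (\<lambda>(l,q). (l, (c#p)@q)) ` set (nodes X)"
  proof -
    have "set (nodes (ins (c#p) X T)) = insert (i, []) {(l, c' # q) |l c' q. c' < length ts \<and> (l, q) \<in> set (nodes (ts[c := ?u] ! c'))}"
      using T by (simp only: ins.simps nodes_Node_set length_list_update)
    also have "\<dots> = insert (i, []) {(l, c' # q) |l c' q. c' < length ts \<and> (l, q) \<in> set (nodes (ts ! c'))}
       \<union> (\<lambda>(l,q). (l, (c#p)@q)) ` set (nodes X)"
    proof (rule set_eqI, rule iffI)
      fix x assume "x \<in> insert (i, []) {(l, c' # q) |l c' q. c' < length ts \<and> (l, q) \<in> set (nodes (ts[c := ?u] ! c'))}"
      then show "x \<in> insert (i, []) {(l, c' # q) |l c' q. c' < length ts \<and> (l, q) \<in> set (nodes (ts ! c'))}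
       \<union> (\<lambda>(l,q). (l, (c#p)@q)) ` set (nodes X)"
        using IH c by (cases "x = (i,[])") (auto simp: nth_list_update split: if_splits)
    next
      fix x assume "x \<in> insert (i, []) {(l, c' # q) |l c' q. c' < length ts \<and> (l, q) \<in> set (nodes (ts ! c'))}
       \<union> (\<lambda>(l,q). (l, (c#p)@q)) ` set (nodes X)"
      then consider "x = (i,[])" | l c' q where "x = (l, c'#q)" "c' < length ts" "(l, q) \<in> set (nodes (ts ! c'))"
        | l q where "x = (l, c#p@q)" "(l,q) \<in> set (nodes X)" by auto
      then show "x \<in> insert (i, []) {(l, c' # q) |l c' q. c' < length ts \<and> (l, q) \<in> set (nodes (ts[c := ?u] ! c'))}"
      proof cases
        case 1 then show ?thesis by simp
      next
        case (2 l c' q)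
        then have "(l, q) \<in> set (nodes (ts[c := ?u] ! c'))"
          using IH c by (cases "c = c'") auto
        then show ?thesis using 2 by blast
      next
        case (3 l q)
        then have "(l, p@q) \<in> set (nodes (ts[c := ?u] ! c))"
          using IH c by auto
        then show ?thesis using 3 c by blast
      qed
    qed
    finally show ?thesis using T by (simp only: nodes_Node_set)
  qed
  have "length (nodes (ins (c#p) X T)) = Suc (sum_list ((map (\<lambda>t. length (nodes t)) ts)[c := length (nodes ?u)]))"
    using T by (simp add: nodesl_length map_update)
  also have "\<dots> = Suc (sum_list (map (\<lambda>t. length (nodes t)) ts) + length (nodes ?u) - length (nodes (ts ! c)))"
    using c by (simp add: sum_list_update)
  also have "\<dots> = length (nodes T) + length (nodes X)"
  proof -
    have "length (nodes (ts ! c)) \<le> sum_list (map (\<lambda>t. length (nodes t)) ts)"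
      using c elem_le_sum_list[of c "map (\<lambda>t. length (nodes t)) ts"] by simp
    then show ?thesis using IH T by (simp add: nodesl_length)
  qed
  finally show ?case using set1 by simp
qed

fun sub :: "ptree \<Rightarrow> nat list \<Rightarrow> ptree" where
  "sub T [] = T"
| "sub Leaf (c#p) = Leaf"
| "sub (Node i ts) (c#p) = sub (ts ! c) p"

lemma sub_props:
  "(l,p) \<in> set (nodes T) \<Longrightarrow>
    (\<exists>ts. sub T p = Node l ts) \<and> ins p (sub T p) (ins p Leaf T) = T \<and> p \<in> set (leaves (ins p Leaf T))
    \<and> (sdec_shape s T \<longrightarrow> sdec_shape s (sub T p)) \<and> set (labels (sub T p)) \<subseteq> set (labels T)"
proof (induction p arbitrary: T)
  case Nil
  then obtain ts where "T = Node l ts"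
    by (cases T) (auto dest: nodesl_addr)
  then show ?case by auto
next
  case (Cons c p)
  then obtain i ts where T: "T = Node i ts" by (cases T) auto
  have c: "c < length ts" and pin: "(l,p) \<in> set (nodes (ts ! c))" using Cons.prems T by (auto simp: nodesl_set)
  note IH = Cons.IH[OF pin]
  have tc: "ts ! c \<in> set ts" using c by simp
  have "ins (c#p) (sub T (c#p)) (ins (c#p) Leaf T) = T"
    using T c IH by simp
  moreover have "c#p \<in> set (leaves (ins (c#p) Leaf T))"
    using T c IH by (simp add: leavesl_set)
  moreover have "sdec_shape s T \<longrightarrow> sdec_shape s (sub T (c#p))" using T IH tc by auto
  moreover have "set (labels (sub T (c#p))) \<subseteq> set (labels T)" using T IH tc by (auto simp: labels_Node)
  ultimately show ?case using T IH by simp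
qed



definition X0 :: "nat \<Rightarrow> ptree" where "X0 x = Node 1 (replicate (Suc x) Leaf)"
definition F :: "nat \<Rightarrow> ptree \<Rightarrow> nat \<Rightarrow> ptree" where
  "F x t j = ins (leaves t ! j) (X0 x) (relab Suc t)"
definition W :: "nat list \<Rightarrow> ptree \<Rightarrow> nat \<Rightarrow> nat \<Rightarrow> nat" where
  "W s' t j b = G (sval s') b (pos t b) (leaves t ! j)"

lemma nodesl_rep: "nodesl j (replicate k Leaf) = []"
  by (induction k arbitrary: j) auto

lemma X0_nodes: "nodes (X0 x) = [(1,[])]"
  by (simp add: X0_def nodesl_rep)

lemma X0_labels: "labels (X0 x) = [1]" by (simp add: labels_def X0_nodes)

lemma X0_shape: "sdec_shape (x#s') (X0 x)"
  by (simp add: X0_def sval_def)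

lemma sdec_labels: "s_decreasing_tree s T \<Longrightarrow> set (labels T) = {1..length s}"
  by (simp add: s_decreasing_tree_def)

lemma sdec_length: "s_decreasing_tree s T \<Longrightarrow> length (labels T) = length s"
  unfolding s_decreasing_tree_def using distinct_card by fastforce

lemma pos_eq: "distinct (labels T) \<Longrightarrow> (a,q) \<in> set (nodes T) \<Longrightarrow> pos T a = q"
  unfolding pos_def labels_def
  by (rule the_equality) (auto intro: eq_key_imp_eq_value)

lemma pos_in: "s_decreasing_tree s T \<Longrightarrow> a \<in> {1..length s} \<Longrightarrow> (a, pos T a) \<in> set (nodes T)"
proof -
  assume T: "s_decreasing_tree s T" and a: "a \<in> {1..length s}"
  then have "a \<in> set (labels T)" by (simp add: sdec_labels)
  then obtain q where q: "(a,q) \<in> set (nodes T)" by (auto simp: labels_def)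
  then have "pos T a = q" using T pos_eq by (auto simp: s_decreasing_tree_def)
  then show ?thesis using q by simp
qed

lemma F_props:
  assumes t: "s_decreasing_tree s' t" and j: "j < length (leaves t)"
  shows "s_decreasing_tree (x#s') (F x t j)"
    and "set (nodes (F x t j)) = (\<lambda>(l,q). (Suc l, q)) ` set (nodes t) \<union> {(1, leaves t ! j)}"
proof -
  have lt: "set (labels t) = {1..length s'}" using t by (simp add: sdec_labels)
  have ge1: "\<forall>l\<in>set (labels t). 1 \<le> l" using lt by auto
  have sh: "sdec_shape (x#s') (relab Suc t)"
    using relab_shape[OF ge1] t by (simp add: s_decreasing_tree_def)
  have lbl: "\<forall>l\<in>set (labels (X0 x)). \<forall>l'\<in>set (labels (relab Suc t)). l < l'"
    using ge1 by (auto simp: X0_labels relab_labels)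
  have shF: "sdec_shape (x#s') (F x t j)"
    unfolding F_def by (rule ins_shape[OF sh X0_shape lbl])
  have pin: "leaves t ! j \<in> set (leaves (relab Suc t))" using j by (simp add: relab_leaves)
  note N = ins_nodes[OF pin, of "X0 x"]
  show S: "set (nodes (F x t j)) = (\<lambda>(l,q). (Suc l, q)) ` set (nodes t) \<union> {(1, leaves t ! j)}"
    using N by (simp add: F_def relab_nodes X0_nodes)
  have len: "length (labels (F x t j)) = Suc (length s')"
    using N sdec_length[OF t] by (simp add: F_def relab_nodes X0_nodes labels_def)
  have "set (labels (F x t j)) = fst ` set (nodes (F x t j))" by (simp add: labels_def)
  also have "\<dots> = Suc ` set (labels t) \<union> {1}" unfolding S by (force simp: labels_def)
  also have "\<dots> = {1..length (x#s')}" unfolding lt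
    by (auto simp: image_def) (metis Suc_le_D Suc_le_mono atLeastAtMost_iff le_zero_eq not_less_eq_eq)
  finally have sl: "set (labels (F x t j)) = {1..length (x#s')}" .
  have "distinct (labels (F x t j))" using sl len by (intro card_distinct) simp
  then show "s_decreasing_tree (x#s') (F x t j)" using sl shF by (simp add: s_decreasing_tree_def)
qed

lemma F_pos:
  assumes t: "s_decreasing_tree s' t" and j: "j < length (leaves t)"
  shows "a \<in> {1..length s'} \<Longrightarrow> pos (F x t j) (Suc a) = pos t a"
    and "pos (F x t j) 1 = leaves t ! j"
proof -
  have d: "distinct (labels (F x t j))" using F_props(1)[OF t j] by (simp add: s_decreasing_tree_def)
  show "a \<in> {1..length s'} \<Longrightarrow> pos (F x t j) (Suc a) = pos t a"
    using pos_in[OF t] F_props(2)[OF t j] by (intro pos_eq[OF d]) force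
  show "pos (F x t j) 1 = leaves t ! j"
    using F_props(2)[OF t j] by (intro pos_eq[OF d]) force
qed

lemma sval_Cons: "1 \<le> b \<Longrightarrow> sval (x#s') (Suc b) = sval s' b"
  by (simp add: sval_def nth_Cons')

lemma TI1:
  assumes t: "s_decreasing_tree s' t" and j: "j < length (leaves t)"
    and "1 \<le> a" "a < b" "b \<le> length s'"
  shows "tree_inv (x#s') (F x t j) (Suc b) (Suc a) = tree_inv s' t b a"
  using assms F_pos[OF t j] sval_Cons[of b x s'] unfolding tree_inv_def Let_def by simp

lemma TI2:
  assumes t: "s_decreasing_tree s' t" and j: "j < length (leaves t)"
    and b: "b \<in> {1..length s'}"
  shows "tree_inv (x#s') (F x t j) (Suc b) 1 = W s' t j b"
  using assms F_pos[OF t j] sval_Cons[of b x s'] unfolding tree_inv_def W_def G_def by simp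

lemma W_step:
  assumes t: "s_decreasing_tree s' t" and j: "Suc j < length (leaves t)"
  shows "\<exists>b0\<in>{1..length s'}. \<forall>b\<in>{1..length s'}. W s' t (Suc j) b = W s' t j b + (if b = b0 then 1 else 0)"
proof -
  have w: "wfa (sval s') t" using t shape_wfa by (simp add: s_decreasing_tree_def)
  have "successively (\<lambda>p p'. \<exists>e\<in>set (nodes t). inc (sval s') (set (nodes t)) p p' e) (leaves t)"
    using step_lemma(1) w by blast
  from successively_nth[OF this j] obtain b0 q0 where
    e: "(b0,q0) \<in> set (nodes t)" "inc (sval s') (set (nodes t)) (leaves t ! j) (leaves t ! Suc j) (b0,q0)"
    by auto
  have d: "distinct (labels t)" using t by (simp add: s_decreasing_tree_def)
  have b0: "b0 \<in> {1..length s'}" using e(1) sdec_labels[OF t] by (force simp: labels_def)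
  have q0: "pos t b0 = q0" using pos_eq[OF d e(1)] .
  show ?thesis
  proof (intro bexI[OF _ b0] ballI)
    fix b assume b: "b \<in> {1..length s'}"
    have "(b, pos t b) \<in> set (nodes t)" using pos_in[OF t b] .
    then have "G (sval s') b (pos t b) (leaves t ! Suc j) = G (sval s') b (pos t b) (leaves t ! j) + (if (b, pos t b) = (b0,q0) then 1 else 0)"
      using e(2) unfolding inc_def by fastforce
    moreover have "((b, pos t b) = (b0,q0)) = (b = b0)" using q0 by auto
    ultimately show "W s' t (Suc j) b = W s' t j b + (if b = b0 then 1 else 0)"
      by (simp add: W_def)
  qed
qed

lemma W_first_last:
  assumes t: "s_decreasing_tree s' t" and b: "b \<in> {1..length s'}"
  shows "W s' t 0 b = 0" and "W s' t (length (leaves t) - 1) b = sval s' b" and "leaves t \<noteq> []"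
proof -
  have w: "wfa (sval s') t" using t shape_wfa by (simp add: s_decreasing_tree_def)
  have fl: "leaves t \<noteq> []" "\<forall>(l,q)\<in>set(nodes t). G (sval s') l q (hd (leaves t)) = 0 \<and> G (sval s') l q (last (leaves t)) = sval s' l"
    using first_last(1)[of "sval s'" t] w by auto
  have e: "(b, pos t b) \<in> set (nodes t)" using pos_in[OF t b] .
  show "W s' t 0 b = 0" using fl e by (auto simp: W_def hd_conv_nth)
  show "W s' t (length (leaves t) - 1) b = sval s' b" using fl e by (auto simp: W_def last_conv_nth)
  show "leaves t \<noteq> []" using fl by simp
qed

lemma W_mono:
  assumes t: "s_decreasing_tree s' t" and b: "b \<in> {1..length s'}"
  shows "j \<le> k \<Longrightarrow> k < length (leaves t) \<Longrightarrow> W s' t j b \<le> W s' t k b"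
proof (induction k)
  case 0 then show ?case by simp
next
  case (Suc k)
  show ?case
  proof (cases "j = Suc k")
    case True then show ?thesis by simp
  next
    case False
    then have "W s' t j b \<le> W s' t k b" using Suc by simp
    moreover obtain b0 where "\<forall>b\<in>{1..length s'}. W s' t (Suc k) b = W s' t k b + (if b = b0 then 1 else 0)"
      using W_step[OF t Suc.prems(2)] by blast
    ultimately show ?thesis using b by fastforce
  qed
qed

lemma W_inj:
  assumes t: "s_decreasing_tree s' t" and j: "j < length (leaves t)" and k: "k < length (leaves t)"
    and eq: "\<forall>b\<in>{1..length s'}. W s' t j b = W s' t k b"
  shows "j = k"
proof (rule ccontr)
  assume "j \<noteq> k"
  then consider "j < k" | "k < j" by linarith
  then show False
  proof cases
    case 1
    obtain b0 where b0: "b0 \<in> {1..length s'}" "\<forall>b\<in>{1..length s'}. W s' t (Suc j) b = W s' t j b + (if b = b0 then 1 else 0)"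
      using W_step[OF t] 1 k by (metis Suc_leI le_less_trans less_or_eq_imp_le not_less_eq)
    have "W s' t (Suc j) b0 \<le> W s' t k b0" using W_mono[OF t b0(1)] 1 k by simp
    then show False using b0 eq by auto
  next
    case 2
    obtain b0 where b0: "b0 \<in> {1..length s'}" "\<forall>b\<in>{1..length s'}. W s' t (Suc k) b = W s' t k b + (if b = b0 then 1 else 0)"
      using W_step[OF t] 2 j by (metis Suc_leI le_less_trans less_or_eq_imp_le not_less_eq)
    have "W s' t (Suc k) b0 \<le> W s' t j b0" using W_mono[OF t b0(1)] 2 j by simp
    then show False using b0 eq by auto
  qed
qed



lemma leaves_ne: "s_decreasing_tree s' t \<Longrightarrow> leaves t \<noteq> []"
  using first_last(1)[of "sval s'" t] shape_wfa by (auto simp: s_decreasing_tree_def)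

lemma sdec_Nil: "s_decreasing_tree [] T \<longleftrightarrow> T = Leaf"
proof
  assume T: "s_decreasing_tree [] T"
  show "T = Leaf"
  proof (cases T)
    case (Node i ts)
    then have "i \<in> set (labels T)" by (simp add: labels_Node)
    then show ?thesis using sdec_labels[OF T] by simp
  qed simp
qed (simp add: s_decreasing_tree_def)

lemma F_surj:
  assumes T: "s_decreasing_tree (x#s') T"
  shows "\<exists>t j. s_decreasing_tree s' t \<and> j < length (leaves t) \<and> T = F x t j"
proof -
  have lT: "set (labels T) = {1..Suc (length s')}" using sdec_labels[OF T] by simp
  then have "1 \<in> set (labels T)" by simp
  then obtain p where p: "(1,p) \<in> set (nodes T)" by (auto simp: labels_def)
  define T0 where "T0 = ins p Leaf T"
  note sp = sub_props[OF p, of "x#s'"]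
  then obtain ts where ts: "sub T p = Node 1 ts" by blast
  have shT: "sdec_shape (x#s') T" using T by (simp add: s_decreasing_tree_def)
  have shs: "sdec_shape (x#s') (Node 1 ts)" using sp shT ts by simp
  have lsub: "set (labels (Node 1 ts)) \<subseteq> {1..Suc (length s')}" using sp lT ts by simp
  have allLeaf: "\<forall>u\<in>set ts. u = Leaf"
  proof
    fix u assume u: "u \<in> set ts"
    show "u = Leaf"
    proof (cases u)
      case (Node l us)
      have "l \<in> set (labels u)" using Node by (simp add: labels_Node)
      moreover have "\<forall>l\<in>set (labels u). l < 1" using shs u by auto
      moreover have "set (labels u) \<subseteq> {1..Suc (length s')}" using lsub u by (auto simp: labels_Node)
      ultimately show ?thesis by fastforce
    qed simp
  qed
  have "length ts = Suc x" using shs by (simp add: sval_def)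
  then have "ts = replicate (Suc x) Leaf" using allLeaf replicate_length_same by metis
  then have subX: "sub T p = X0 x" using ts by (simp add: X0_def)
  have TT0: "T = ins p (X0 x) T0" using sp subX by (simp add: T0_def)
  have pin: "p \<in> set (leaves T0)" using sp by (simp add: T0_def)
  note N = ins_nodes[OF pin, of "X0 x"]
  have sl: "set (labels T) = insert 1 (set (labels T0))"
    using N TT0 by (auto simp: labels_def X0_nodes)
  have ll: "length (labels T) = Suc (length (labels T0))"
    using N TT0 by (simp add: labels_def X0_nodes)
  have len0: "length (labels T0) = length s'" using ll sdec_length[OF T] by simp
  have sub0: "{2..Suc (length s')} \<subseteq> set (labels T0)"
  proof
    fix y assume y: "y \<in> {2..Suc (length s')}"
    then have y1: "y \<in> {1..Suc (length s')}" "y \<noteq> 1" by auto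
    then have "y \<in> set (labels T)" unfolding lT by blast
    then have "y \<in> insert 1 (set (labels T0))" unfolding sl by blast
    then show "y \<in> set (labels T0)" using y1(2) by blast
  qed
  have "set (labels T0) \<subseteq> set (labels T)" unfolding sl by blast
  then have sub0': "set (labels T0) \<subseteq> {1..Suc (length s')}" unfolding lT .
  have cle: "card (set (labels T0)) \<le> length s'" using card_length[of "labels T0"] len0 by simp
  have "{2..Suc (length s')} = set (labels T0)"
    by (rule card_seteq) (use sub0 cle in auto)
  then have seq: "set (labels T0) = {2..Suc (length s')}" by simp
  have d0: "distinct (labels T0)" using seq len0 by (intro card_distinct) simp
  have sh0: "sdec_shape (x#s') T0" unfolding T0_def by (rule ins_shape[OF shT]) (auto simp: labels_def)
  define t where "t = relab (\<lambda>i. i - 1) T0"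
  have rt: "relab Suc t = T0" unfolding t_def relab_relab using seq by (intro relab_id) auto
  have lt: "labels t = map (\<lambda>i. i - 1) (labels T0)" by (simp add: t_def relab_labels)
  have slt: "set (labels t) = {1..length s'}"
  proof -
    have "(\<lambda>i. i - 1) ` {2..Suc (length s')} = {1..length s'}"
    proof (rule set_eqI, rule iffI)
      fix y assume "y \<in> (\<lambda>i. i - 1) ` {2..Suc (length s')}"
      then show "y \<in> {1..length s'}" by auto
    next
      fix y assume y: "y \<in> {1..length s'}"
      then have "Suc y \<in> {2..Suc (length s')}" by auto
      then show "y \<in> (\<lambda>i. i - 1) ` {2..Suc (length s')}" by (metis diff_Suc_1 image_eqI)
    qed
    then show ?thesis using lt seq by simp
  qed
  have dt: "distinct (labels t)"
    using d0 seq unfolding lt by (auto simp: distinct_map inj_on_def)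
  have ge: "\<forall>l\<in>set (labels t). 1 \<le> l" using slt by simp
  have sht: "sdec_shape s' t"
    using relab_shape[OF ge, of x s'] sh0 unfolding rt by simp
  have st: "s_decreasing_tree s' t" using sht dt slt by (simp add: s_decreasing_tree_def)
  have "p \<in> set (leaves t)" using pin rt relab_leaves(1)[of Suc t] by simp
  then obtain j where j: "j < length (leaves t)" "leaves t ! j = p" by (auto simp: in_set_conv_nth)
  have "T = F x t j" using TT0 rt j by (simp add: F_def)
  then show ?thesis using st j by blast
qed

lemma sdec_inj:
  "s_decreasing_tree s T \<Longrightarrow> s_decreasing_tree s U \<Longrightarrow>
   (\<forall>a b. 1 \<le> a \<and> a < b \<and> b \<le> length s \<longrightarrow> tree_inv s T b a = tree_inv s U b a) \<Longrightarrow> T = U"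
proof (induction s arbitrary: T U)
  case Nil then show ?case by (simp add: sdec_Nil)
next
  case (Cons x s')
  obtain t j where t: "s_decreasing_tree s' t" "j < length (leaves t)" "T = F x t j" using F_surj[OF Cons.prems(1)] by blast
  obtain u k where u: "s_decreasing_tree s' u" "k < length (leaves u)" "U = F x u k" using F_surj[OF Cons.prems(2)] by blast
  have "\<forall>a b. 1 \<le> a \<and> a < b \<and> b \<le> length s' \<longrightarrow> tree_inv s' t b a = tree_inv s' u b a"
  proof (intro allI impI)
    fix a b assume ab: "1 \<le> a \<and> a < b \<and> b \<le> length s'"
    have "tree_inv (x#s') T (Suc b) (Suc a) = tree_inv (x#s') U (Suc b) (Suc a)" using Cons.prems(3) ab by auto
    then show "tree_inv s' t b a = tree_inv s' u b a" using TI1[OF t(1,2)] TI1[OF u(1,2)] ab t(3) u(3) by auto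
  qed
  then have tu: "t = u" using Cons.IH t(1) u(1) by blast
  have "\<forall>b\<in>{1..length s'}. W s' t j b = W s' t k b"
  proof
    fix b assume b: "b \<in> {1..length s'}"
    have "tree_inv (x#s') T (Suc b) 1 = tree_inv (x#s') U (Suc b) 1" using Cons.prems(3) b by auto
    then show "W s' t j b = W s' t k b" using TI2[OF t(1,2) b] TI2[OF u(1,2)] b t(3) u(3) tu by auto
  qed
  then have "j = k" using W_inj[OF t(1,2)] u(2) tu by blast
  then show ?case using t u tu by simp
qed

lemma F_inj:
  assumes t: "s_decreasing_tree s' t" "j < length (leaves t)"
    and u: "s_decreasing_tree s' u" "k < length (leaves u)"
    and eq: "F x t j = F x u k"
  shows "t = u \<and> j = k"
proof -
  have A: "tree_inv s' t b a = tree_inv s' u b a" if ab: "1 \<le> a" "a < b" "b \<le> length s'" for a b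
  proof -
    have "tree_inv s' t b a = tree_inv (x#s') (F x t j) (Suc b) (Suc a)" using TI1[OF t ab] by simp
    also have "\<dots> = tree_inv (x#s') (F x u k) (Suc b) (Suc a)" using eq by simp
    also have "\<dots> = tree_inv s' u b a" using TI1[OF u ab] by simp
    finally show ?thesis .
  qed
  have tu: "t = u" by (rule sdec_inj[OF t(1) u(1)]) (use A in auto)
  have "W s' t j b = W s' t k b" if b: "b \<in> {1..length s'}" for b
  proof -
    have "W s' t j b = tree_inv (x#s') (F x t j) (Suc b) 1" using TI2[OF t b] by simp
    also have "\<dots> = tree_inv (x#s') (F x u k) (Suc b) 1" using eq by simp
    also have "\<dots> = W s' t k b" using TI2[OF u b] tu by simp
    finally show ?thesis .
  qed
  then have "\<forall>b\<in>{1..length s'}. W s' t j b = W s' t k b" by blast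
  then show ?thesis using W_inj[OF t] u(2) tu by blast
qed



lemma le_F:
  assumes t: "s_decreasing_tree s' t" "j < length (leaves t)"
    and u: "s_decreasing_tree s' u" "k < length (leaves u)"
  shows "s_weak_le (x#s') (F x t j) (F x u k) \<longleftrightarrow>
         s_weak_le s' t u \<and> (\<forall>b\<in>{1..length s'}. W s' t j b \<le> W s' u k b)"
proof
  assume H: "s_weak_le (x#s') (F x t j) (F x u k)"
  have A: "tree_inv s' t b a \<le> tree_inv s' u b a" if ab: "1 \<le> a" "a < b" "b \<le> length s'" for a b
  proof -
    have "tree_inv (x#s') (F x t j) (Suc b) (Suc a) \<le> tree_inv (x#s') (F x u k) (Suc b) (Suc a)"
      using H ab unfolding s_weak_le_def by simp
    then show ?thesis using TI1[OF t ab] TI1[OF u ab] by simp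
  qed
  have B: "W s' t j b \<le> W s' u k b" if b: "b \<in> {1..length s'}" for b
  proof -
    have "tree_inv (x#s') (F x t j) (Suc b) 1 \<le> tree_inv (x#s') (F x u k) (Suc b) 1"
      using H b unfolding s_weak_le_def by simp
    then show ?thesis using TI2[OF t b] TI2[OF u b] by simp
  qed
  show "s_weak_le s' t u \<and> (\<forall>b\<in>{1..length s'}. W s' t j b \<le> W s' u k b)"
    using A B unfolding s_weak_le_def by blast
next
  assume H: "s_weak_le s' t u \<and> (\<forall>b\<in>{1..length s'}. W s' t j b \<le> W s' u k b)"
  show "s_weak_le (x#s') (F x t j) (F x u k)"
    unfolding s_weak_le_def
  proof (intro allI impI)
    fix a b assume ab: "1 \<le> a \<and> a < b \<and> b \<le> length (x#s')"
    then obtain b' where b': "b = Suc b'" "1 \<le> b'" "b' \<le> length s'" by (cases b) auto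
    show "tree_inv (x # s') (F x t j) b a \<le> tree_inv (x # s') (F x u k) b a"
    proof (cases "a = 1")
      case True
      have bb: "b' \<in> {1..length s'}" using b' by simp
      show ?thesis using True b' TI2[OF t bb] TI2[OF u bb] H bb by simp
    next
      case False
      then obtain a' where a': "a = Suc a'" "1 \<le> a'" "a' < b'" using ab b' by (cases a) auto
      have "tree_inv s' t b' a' \<le> tree_inv s' u b' a'" using H a' b' unfolding s_weak_le_def by simp
      then show ?thesis using a' b' TI1[OF t a'(2,3) b'(3)] TI1[OF u a'(2,3) b'(3)] by simp
    qed
  qed
qed

lemma le_refl: "s_weak_le s t t" by (simp add: s_weak_le_def)

lemma le_antisym_eq:
  assumes "s_decreasing_tree s t" "s_decreasing_tree s u" "s_weak_le s t u" "s_weak_le s u t"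
  shows "t = u"
  by (rule sdec_inj[OF assms(1,2)]) (use assms(3,4) in \<open>auto simp: s_weak_le_def intro: antisym\<close>)

lemma cover_h:
  assumes t: "s_decreasing_tree s' t" and j: "Suc j < length (leaves t)"
  shows "s_weak_cover (x#s') (F x t j) (F x t (Suc j))"
proof -
  have j0: "j < length (leaves t)" using j by simp
  obtain b0 where b0: "b0 \<in> {1..length s'}"
    "\<forall>b\<in>{1..length s'}. W s' t (Suc j) b = W s' t j b + (if b = b0 then 1 else 0)"
    using W_step[OF t j] by blast
  have le: "s_weak_le (x#s') (F x t j) (F x t (Suc j))"
    using le_F[OF t j0 t j] le_refl b0 by fastforce
  have ne: "F x t j \<noteq> F x t (Suc j)" using F_inj[OF t j0 t j] by auto
  have noU: "\<not> (\<exists>U. s_decreasing_tree (x#s') U \<and> s_weak_le (x#s') (F x t j) U \<and> s_weak_le (x#s') U (F x t (Suc j))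
        \<and> U \<noteq> F x t j \<and> U \<noteq> F x t (Suc j))"
  proof
    assume "\<exists>U. s_decreasing_tree (x#s') U \<and> s_weak_le (x#s') (F x t j) U \<and> s_weak_le (x#s') U (F x t (Suc j))
        \<and> U \<noteq> F x t j \<and> U \<noteq> F x t (Suc j)"
    then obtain U where U: "s_decreasing_tree (x#s') U" "s_weak_le (x#s') (F x t j) U" "s_weak_le (x#s') U (F x t (Suc j))"
        "U \<noteq> F x t j" "U \<noteq> F x t (Suc j)" by blast
    obtain u k where u: "s_decreasing_tree s' u" "k < length (leaves u)" "U = F x u k" using F_surj[OF U(1)] by blast
    have l1: "s_weak_le s' t u" "\<forall>b\<in>{1..length s'}. W s' t j b \<le> W s' u k b"
      using U(2) le_F[OF t j0 u(1,2)] u(3) by auto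
    have l2: "s_weak_le s' u t" "\<forall>b\<in>{1..length s'}. W s' u k b \<le> W s' t (Suc j) b"
      using U(3) le_F[OF u(1,2) t j] u(3) by auto
    have tu: "u = t" using le_antisym_eq[OF u(1) t l2(1) l1(1)] .
    show False
    proof (cases "W s' t k b0 = W s' t j b0")
      case True
      have "\<forall>b\<in>{1..length s'}. W s' t j b = W s' t k b"
      proof
        fix b assume b: "b \<in> {1..length s'}"
        show "W s' t j b = W s' t k b"
        proof (cases "b = b0")
          case True then show ?thesis using \<open>W s' t k b0 = W s' t j b0\<close> by simp
        next
          case False then show ?thesis using l1(2) l2(2) b0(2) b tu by fastforce
        qed
      qed
      then have "j = k" using W_inj[OF t j0] u(2) tu by blast
      then show False using U(4) u(3) tu by simp
    next
      case False
      have "\<forall>b\<in>{1..length s'}. W s' t (Suc j) b = W s' t k b"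
      proof
        fix b assume b: "b \<in> {1..length s'}"
        show "W s' t (Suc j) b = W s' t k b"
        proof (cases "b = b0")
          case True
          have "W s' t j b0 \<le> W s' t k b0" "W s' t k b0 \<le> W s' t j b0 + 1"
            using l1(2) l2(2) b0 tu by fastforce+
          then show ?thesis using True False b0 by auto
        next
          case False then show ?thesis using l1(2) l2(2) b0(2) b tu by fastforce
        qed
      qed
      then have "Suc j = k" using W_inj[OF t j] u(2) tu by blast
      then show False using U(5) u(3) tu by simp
    qed
  qed
  show ?thesis unfolding s_weak_cover_def
    using F_props(1)[OF t j0] F_props(1)[OF t j] le ne noU by blast
qed

lemma cover_v:
  assumes t: "s_decreasing_tree s' t" "j < length (leaves t)"
    and t': "s_decreasing_tree s' t'" "j' < length (leaves t')"
    and eqW: "\<forall>b\<in>{1..length s'}. W s' t j b = W s' t' j' b"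
    and cov: "s_weak_cover s' t t'"
  shows "s_weak_cover (x#s') (F x t j) (F x t' j')"
proof -
  have tle: "s_weak_le s' t t'" and tne: "t \<noteq> t'"
    and nb: "\<not> (\<exists>U. s_decreasing_tree s' U \<and> s_weak_le s' t U \<and> s_weak_le s' U t' \<and> U \<noteq> t \<and> U \<noteq> t')"
    using cov unfolding s_weak_cover_def by auto
  have le: "s_weak_le (x#s') (F x t j) (F x t' j')"
    using le_F[OF t t'] tle eqW by simp
  have ne: "F x t j \<noteq> F x t' j'" using F_inj[OF t t'] tne by auto
  have noU: "\<not> (\<exists>U. s_decreasing_tree (x#s') U \<and> s_weak_le (x#s') (F x t j) U \<and> s_weak_le (x#s') U (F x t' j')
        \<and> U \<noteq> F x t j \<and> U \<noteq> F x t' j')"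
  proof
    assume "\<exists>U. s_decreasing_tree (x#s') U \<and> s_weak_le (x#s') (F x t j) U \<and> s_weak_le (x#s') U (F x t' j')
        \<and> U \<noteq> F x t j \<and> U \<noteq> F x t' j'"
    then obtain U where U: "s_decreasing_tree (x#s') U" "s_weak_le (x#s') (F x t j) U" "s_weak_le (x#s') U (F x t' j')"
        "U \<noteq> F x t j" "U \<noteq> F x t' j'" by blast
    obtain u k where u: "s_decreasing_tree s' u" "k < length (leaves u)" "U = F x u k" using F_surj[OF U(1)] by blast
    have l1: "s_weak_le s' t u" "\<forall>b\<in>{1..length s'}. W s' t j b \<le> W s' u k b"
      using U(2) le_F[OF t u(1,2)] u(3) by auto
    have l2: "s_weak_le s' u t'" "\<forall>b\<in>{1..length s'}. W s' u k b \<le> W s' t' j' b"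
      using U(3) le_F[OF u(1,2) t'] u(3) by auto
    have uu: "u = t \<or> u = t'" using nb u(1) l1(1) l2(1) by blast
    have wk: "\<forall>b\<in>{1..length s'}. W s' u k b = W s' t j b"
      using l1(2) l2(2) eqW by (metis antisym)
    show False
    proof (cases "u = t")
      case True
      then have "j = k" using W_inj[OF t] u(2) wk by metis
      then show False using U(4) u(3) True by simp
    next
      case False
      then have ut: "u = t'" using uu by simp
      then have "k = j'" using W_inj[OF t'] u(2) wk eqW by metis
      then show False using U(5) u(3) ut by simp
    qed
  qed
  show ?thesis unfolding s_weak_cover_def
    using F_props(1)[OF t] F_props(1)[OF t'] le ne noU by blast
qed



fun zz :: "('b \<Rightarrow> nat \<Rightarrow> 'a) \<Rightarrow> ('b \<Rightarrow> nat) \<Rightarrow> bool \<Rightarrow> 'b list \<Rightarrow> 'a list" where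
  "zz Fn N d [] = []"
| "zz Fn N d (t#ts) = map (Fn t) (if d then [0..<N t] else rev [0..<N t]) @ zz Fn N (\<not> d) ts"

lemma zz_set: "set (zz Fn N d P) = {Fn t j | t j. t \<in> set P \<and> j < N t}"
proof (induction P arbitrary: d)
  case Nil then show ?case by simp
next
  case (Cons t ts)
  have "set (map (Fn t) (if d then [0..<N t] else rev [0..<N t])) = {Fn t j | j. j < N t}" by auto
  then show ?case using Cons by auto
qed

lemma zz_distinct:
  assumes "distinct P"
    and inj: "\<forall>t\<in>set P. \<forall>t'\<in>set P. \<forall>j k. j < N t \<longrightarrow> k < N t' \<longrightarrow> Fn t j = Fn t' k \<longrightarrow> t = t' \<and> j = k"
  shows "distinct (zz Fn N d P)"
  using assms
proof (induction P arbitrary: d)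
  case Nil then show ?case by simp
next
  case (Cons t ts)
  have io: "inj_on (Fn t) {0..<N t}"
  proof (rule inj_onI)
    fix j k assume "j \<in> {0..<N t}" "k \<in> {0..<N t}" "Fn t j = Fn t k"
    then show "j = k" using Cons.prems(2) by auto
  qed
  have d1: "distinct (map (Fn t) (if d then [0..<N t] else rev [0..<N t]))"
    using io by (simp add: distinct_map)
  have d2: "distinct (zz Fn N (\<not> d) ts)" using Cons.IH Cons.prems by simp
  have dj: "set (map (Fn t) (if d then [0..<N t] else rev [0..<N t])) \<inter> set (zz Fn N (\<not> d) ts) = {}"
  proof (rule ccontr)
    assume "set (map (Fn t) (if d then [0..<N t] else rev [0..<N t])) \<inter> set (zz Fn N (\<not> d) ts) \<noteq> {}"
    then obtain j t' k where h: "j < N t" "t' \<in> set ts" "k < N t'" "Fn t j = Fn t' k"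
      unfolding zz_set by (auto split: if_splits)
    then have "t = t'" using Cons.prems(2) by auto
    then show False using h(2) Cons.prems(1) by simp
  qed
  show ?case using d1 d2 dj by simp
qed

lemma successively_upt: "(\<And>i. Suc i < n \<Longrightarrow> R i (Suc i)) \<Longrightarrow> successively R [0..<n]"
proof (induction n)
  case 0 then show ?case by simp
next
  case (Suc n)
  show ?case
  proof (cases n)
    case 0 then show ?thesis by simp
  next
    case (Suc m)
    have "successively R [0..<n]" using Suc.IH Suc.prems by simp
    moreover have "R (last [0..<n]) n" using Suc.prems Suc by simp
    ultimately show ?thesis by (simp add: successively_append_iff Suc)
  qed
qed

lemma zz_path:
  assumes E: "\<And>a b. E a b \<Longrightarrow> E b a"
    and pos: "\<forall>t\<in>set P. 0 < N t"
    and hor: "\<forall>t\<in>set P. \<forall>j. Suc j < N t \<longrightarrow> E (Fn t j) (Fn t (Suc j))"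
    and base: "successively R P"
    and ver: "\<forall>t\<in>set P. \<forall>t'\<in>set P. R t t' \<longrightarrow> E (Fn t 0) (Fn t' 0) \<and> E (Fn t (N t - 1)) (Fn t' (N t' - 1))"
  shows "successively E (zz Fn N d P)"
  using pos hor base ver
proof (induction P arbitrary: d)
  case Nil then show ?case by simp
next
  case (Cons t ts)
  have h: "\<And>j. Suc j < N t \<Longrightarrow> E (Fn t j) (Fn t (Suc j))" using Cons.prems(2) by auto
  have B: "successively E (map (Fn t) (if d then [0..<N t] else rev [0..<N t]))"
    using h E by (auto simp: successively_map intro!: successively_upt)
  have Rt: "successively E (zz Fn N (\<not> d) ts)"
    using Cons.IH Cons.prems by (auto simp: successively_Cons)
  have J: "E (last (map (Fn t) (if d then [0..<N t] else rev [0..<N t]))) (hd (zz Fn N (\<not> d) ts))"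
    if nz: "zz Fn N (\<not> d) ts \<noteq> []"
  proof -
    obtain t' ts' where ts: "ts = t' # ts'" using nz by (cases ts) auto
    have pt: "0 < N t" "0 < N t'" using Cons.prems(1) ts by auto
    have R: "R t t'" using Cons.prems(3) ts by simp
    have EE: "E (Fn t 0) (Fn t' 0) \<and> E (Fn t (N t - 1)) (Fn t' (N t' - 1))"
      using Cons.prems(4) R ts by simp
    have l: "last (map (Fn t) (if d then [0..<N t] else rev [0..<N t])) = (if d then Fn t (N t - 1) else Fn t 0)"
      using pt by (auto simp: last_map hd_map last_rev hd_upt)
    have hh: "hd (zz Fn N (\<not> d) ts) = (if d then Fn t' (N t' - 1) else Fn t' 0)"
      using pt ts by (auto simp: hd_map hd_rev hd_append hd_upt)
    show ?thesis using l hh EE by simp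
  qed
  show ?case unfolding zz.simps successively_append_iff using B Rt J by blast
qed

lemma main_lemma: "\<exists>L. distinct L \<and> set L = {T. s_decreasing_tree s T} \<and> successively (s_perm_edge s) L"
proof (induction s)
  case Nil
  show ?case by (rule exI[of _ "[Leaf]"]) (auto simp: sdec_Nil)
next
  case (Cons x s')
  then obtain L' where L': "distinct L'" "set L' = {T. s_decreasing_tree s' T}" "successively (s_perm_edge s') L'"
    by blast
  let ?N = "\<lambda>t. length (leaves t)"
  define L where "L = zz (F x) ?N True L'"
  have "distinct L" unfolding L_def
  proof (rule zz_distinct[OF L'(1)], intro ballI allI impI)
    fix t t' j k assume tt: "t \<in> set L'" "t' \<in> set L'" "j < ?N t" "k < ?N t'" "F x t j = F x t' k"
    have t: "s_decreasing_tree s' t" and t': "s_decreasing_tree s' t'" using tt(1,2) L'(2) by auto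
    show "t = t' \<and> j = k" by (rule F_inj[OF t tt(3) t' tt(4) tt(5)])
  qed
  moreover have "set L = {T. s_decreasing_tree (x#s') T}"
  proof (rule set_eqI, rule iffI)
    fix T assume "T \<in> set L"
    then obtain t j where "T = F x t j" "s_decreasing_tree s' t" "j < ?N t"
      unfolding L_def zz_set L'(2) by blast
    then show "T \<in> {T. s_decreasing_tree (x#s') T}" using F_props(1) by simp
  next
    fix T assume "T \<in> {T. s_decreasing_tree (x#s') T}"
    then obtain t j where "T = F x t j" "s_decreasing_tree s' t" "j < ?N t"
      using F_surj by blast
    then show "T \<in> set L" unfolding L_def zz_set L'(2) by blast
  qed
  moreover have "successively (s_perm_edge (x#s')) L"
    unfolding L_def
  proof (rule zz_path[OF _ _ _ L'(3)])
    show "\<And>a b. s_perm_edge (x # s') a b \<Longrightarrow> s_perm_edge (x # s') b a"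
      by (auto simp: s_perm_edge_def)
    show "\<forall>t\<in>set L'. 0 < ?N t" using L'(2) leaves_ne by auto
    show "\<forall>t\<in>set L'. \<forall>j. Suc j < ?N t \<longrightarrow> s_perm_edge (x # s') (F x t j) (F x t (Suc j))"
    proof (intro ballI allI impI)
      fix t j assume "t \<in> set L'" "Suc j < ?N t"
      then show "s_perm_edge (x # s') (F x t j) (F x t (Suc j))"
        using L'(2) cover_h unfolding s_perm_edge_def by blast
    qed
    show "\<forall>t\<in>set L'. \<forall>t'\<in>set L'. s_perm_edge s' t t' \<longrightarrow>
        s_perm_edge (x # s') (F x t 0) (F x t' 0) \<and>
        s_perm_edge (x # s') (F x t (?N t - 1)) (F x t' (?N t' - 1))"
    proof (intro ballI impI)
      fix t t' assume tt: "t \<in> set L'" "t' \<in> set L'" and e: "s_perm_edge s' t t'"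
      have t: "s_decreasing_tree s' t" and t': "s_decreasing_tree s' t'" using tt L'(2) by auto
      have n: "0 < ?N t" "0 < ?N t'" using leaves_ne t t' by auto
      have w0: "\<forall>b\<in>{1..length s'}. W s' t 0 b = W s' t' 0 b" using W_first_last(1) t t' by simp
      have w1: "\<forall>b\<in>{1..length s'}. W s' t (?N t - 1) b = W s' t' (?N t' - 1) b"
        using W_first_last(2) t t' by simp
      have w0': "\<forall>b\<in>{1..length s'}. W s' t' 0 b = W s' t 0 b" using w0 by simp
      have w1': "\<forall>b\<in>{1..length s'}. W s' t' (?N t' - 1) b = W s' t (?N t - 1) b" using w1 by simp
      have i0: "0 < ?N t" "0 < ?N t'" using n .
      have i1: "?N t - 1 < ?N t" "?N t' - 1 < ?N t'" using n by auto
      from e have "s_weak_cover s' t t' \<or> s_weak_cover s' t' t" by (simp add: s_perm_edge_def)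
      then show "s_perm_edge (x # s') (F x t 0) (F x t' 0) \<and>
        s_perm_edge (x # s') (F x t (?N t - 1)) (F x t' (?N t' - 1))"
      proof
        assume c: "s_weak_cover s' t t'"
        show ?thesis using cover_v[OF t i0(1) t' i0(2) w0 c] cover_v[OF t i1(1) t' i1(2) w1 c] by (simp add: s_perm_edge_def)
      next
        assume c: "s_weak_cover s' t' t"
        show ?thesis using cover_v[OF t' i0(2) t i0(1) w0' c] cover_v[OF t' i1(2) t i1(1) w1' c] by (simp add: s_perm_edge_def)
      qed
    qed
  qed
  ultimately show ?case by blast
qed

theorem theorem1:
  fixes s :: "nat list"
  assumes "\<forall>i \<in> set s. 0 < i"
  shows "\<exists>L. distinct L \<and> set L = {T. s_decreasing_tree s T} \<and>
           (\<forall>i. Suc i < length L \<longrightarrow> s_perm_edge s (L ! i) (L ! Suc i))"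
  using main_lemma[of s] successively_nth by blast


end
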